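(* Let $X$ be a Priestley space and $\mathcal U\subseteq{\sf DM}(X)$. Then the join $\bigvee\mathcal U$ in ${\sf DM}(X)$ is distributive (i.e., $V\cap\bigvee\mathcal U=\bigvee\{V\cap U:U\in\mathcal U\}$ in ${\sf DM}(X)$ for every $V\in{\sf DM}(X)$) if and only if $\bigvee\mathcal U={\sf int_1\,cl}\bigcup\mathcal U$.
   Context: A Priestley space is a compact space $X$ with a partial order $\le$ such that whenever $x\not\le y$ there is a clopen upset containing $x$ but not $y$. ${\sf cl}$, ${\sf int}$ denote closure and interior in the topology of $X$; ${\sf int_1}$ is the interior in the topology of open upsets, ${\sf cl_2}$ the closure in the topology of open downsets; explicitly ${\sf cl_2}(S)={\uparrow}{\sf cl}(S)$ and ${\sf int_1}(S)=X\setminus{\downarrow}(X\setminus{\sf int}(S))$. A DM-set is an open upset $U$ with ${\sf int_1\,cl_2}(U)=U$; ${\sf DM}(X)$ is the complete lattice of DM-sets, with finite meets given by intersection and joins $\bigvee\mathcal U={\sf int_1\,cl_2}(\bigcup\mathcal U)$. *)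

theory Defs
  imports "HOL-Analysis.Analysis"
begin

definition partial_order_on_space :: "'a topology \<Rightarrow> ('a \<Rightarrow> 'a \<Rightarrow> bool) \<Rightarrow> bool" where
  "partial_order_on_space X le \<longleftrightarrow>
     (\<forall>x\<in>topspace X. le x x) \<and>
     (\<forall>x\<in>topspace X. \<forall>y\<in>topspace X. \<forall>z\<in>topspace X. le x y \<longrightarrow> le y z \<longrightarrow> le x z) \<and>
     (\<forall>x\<in>topspace X. \<forall>y\<in>topspace X. le x y \<longrightarrow> le y x \<longrightarrow> x = y)"

definition is_upset :: "'a topology \<Rightarrow> ('a \<Rightarrow> 'a \<Rightarrow> bool) \<Rightarrow> 'a set \<Rightarrow> bool" where
  "is_upset X le S \<longleftrightarrow> S \<subseteq> topspace X \<and>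
     (\<forall>x\<in>S. \<forall>y\<in>topspace X. le x y \<longrightarrow> y \<in> S)"

definition priestley_space :: "'a topology \<Rightarrow> ('a \<Rightarrow> 'a \<Rightarrow> bool) \<Rightarrow> bool" where
  "priestley_space X le \<longleftrightarrow> compact_space X \<and> partial_order_on_space X le \<and>
     (\<forall>x\<in>topspace X. \<forall>y\<in>topspace X. \<not> le x y \<longrightarrow>
        (\<exists>U. closedin X U \<and> openin X U \<and> is_upset X le U \<and> x \<in> U \<and> y \<notin> U))"

definition upclosure :: "'a topology \<Rightarrow> ('a \<Rightarrow> 'a \<Rightarrow> bool) \<Rightarrow> 'a set \<Rightarrow> 'a set" where
  "upclosure X le S = {y \<in> topspace X. \<exists>x\<in>S. le x y}"

definition downclosure :: "'a topology \<Rightarrow> ('a \<Rightarrow> 'a \<Rightarrow> bool) \<Rightarrow> 'a set \<Rightarrow> 'a set" where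
  "downclosure X le S = {y \<in> topspace X. \<exists>x\<in>S. le y x}"

text \<open>cl_2(S) = up(cl S): closure in the topology of open downsets.\<close>
definition cl2 :: "'a topology \<Rightarrow> ('a \<Rightarrow> 'a \<Rightarrow> bool) \<Rightarrow> 'a set \<Rightarrow> 'a set" where
  "cl2 X le S = upclosure X le (X closure_of S)"

text \<open>int_1(S) = X - down(X - int S): interior in the topology of open upsets.\<close>
definition int1 :: "'a topology \<Rightarrow> ('a \<Rightarrow> 'a \<Rightarrow> bool) \<Rightarrow> 'a set \<Rightarrow> 'a set" where
  "int1 X le S = topspace X - downclosure X le (topspace X - X interior_of S)"

definition DM_set :: "'a topology \<Rightarrow> ('a \<Rightarrow> 'a \<Rightarrow> bool) \<Rightarrow> 'a set \<Rightarrow> bool" where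
  "DM_set X le U \<longleftrightarrow> openin X U \<and> is_upset X le U \<and> int1 X le (cl2 X le U) = U"

definition DM_join :: "'a topology \<Rightarrow> ('a \<Rightarrow> 'a \<Rightarrow> bool) \<Rightarrow> 'a set set \<Rightarrow> 'a set" where
  "DM_join X le \<U> = int1 X le (cl2 X le (\<Union>\<U>))"

definition DM_join_distributive :: "'a topology \<Rightarrow> ('a \<Rightarrow> 'a \<Rightarrow> bool) \<Rightarrow> 'a set set \<Rightarrow> bool" where
  "DM_join_distributive X le \<U> \<longleftrightarrow>
     (\<forall>V. DM_set X le V \<longrightarrow> V \<inter> DM_join X le \<U> = DM_join X le ((\<lambda>U. V \<inter> U) ` \<U>))"

end

theory Submission
  imports Defs
begin

definition dset :: "'a topology \<Rightarrow> ('a \<Rightarrow> 'a \<Rightarrow> bool) \<Rightarrow> 'a set \<Rightarrow> bool" where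
  "dset X le S \<longleftrightarrow> S \<subseteq> topspace X \<and> (\<forall>x\<in>S. \<forall>y\<in>topspace X. le y x \<longrightarrow> y \<in> S)"

lemma int1_mono: "A \<subseteq> B \<Longrightarrow> int1 X le A \<subseteq> int1 X le B"
  unfolding int1_def downclosure_def using interior_of_mono[of A B X] by blast

lemma cl2_mono: "A \<subseteq> B \<Longrightarrow> cl2 X le A \<subseteq> cl2 X le B"
  unfolding cl2_def upclosure_def using closure_of_mono[of A B X] by blast

lemma int1_sub_int:
  assumes "partial_order_on_space X le"
  shows "int1 X le A \<subseteq> X interior_of A"
  using assms unfolding int1_def downclosure_def partial_order_on_space_def by blast

lemma int1_upset:
  assumes "partial_order_on_space X le" "x \<in> int1 X le A" "y \<in> topspace X" "le x y"
  shows "y \<in> int1 X le A"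
  using assms unfolding int1_def downclosure_def partial_order_on_space_def by blast

lemma openup_sub_int1:
  assumes "openin X W" "is_upset X le W" "W \<subseteq> A"
  shows "W \<subseteq> int1 X le A"
proof -
  have "W \<subseteq> X interior_of A" using assms by (simp add: interior_of_maximal)
  then show ?thesis using assms unfolding int1_def downclosure_def is_upset_def by blast
qed

lemma clopen_up_fix:
  assumes "partial_order_on_space X le" "openin X B" "closedin X B" "is_upset X le B"
  shows "int1 X le (cl2 X le B) = B"
proof -
  have "cl2 X le B = B"
    using assms unfolding cl2_def upclosure_def is_upset_def partial_order_on_space_def
    by (auto simp: closure_of_closedin)
  moreover have "int1 X le B = B"
    using assms unfolding int1_def downclosure_def is_upset_def partial_order_on_space_def
    by (auto simp: interior_of_openin)
  ultimately show ?thesis by simp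
qed

lemma sep:
  assumes P: "priestley_space X le" and K: "closedin X K" and z: "z \<in> topspace X" "z \<notin> K"
  shows "\<exists>A B. openin X A \<and> closedin X A \<and> is_upset X le A \<and>
                openin X B \<and> closedin X B \<and> is_upset X le B \<and>
                z \<in> A \<and> z \<notin> B \<and> K \<inter> A \<subseteq> B \<and>
                ((\<forall>w\<in>K. \<not> le z w) \<longrightarrow> B = {})"
proof -
  have cs: "compact_space X" and po: "partial_order_on_space X le"
    and sp: "\<And>x y. x\<in>topspace X \<Longrightarrow> y\<in>topspace X \<Longrightarrow> \<not> le x y \<Longrightarrow>
        (\<exists>U. closedin X U \<and> openin X U \<and> is_upset X le U \<and> x \<in> U \<and> y \<notin> U)"
    using P unfolding priestley_space_def by blast+
  have ck: "compactin X K" using cs K closedin_compact_space by blast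
  define C where "C = {T. openin X T \<and> closedin X T \<and> z \<notin> T \<and>
       (dset X le T \<or> (is_upset X le T \<and> (\<exists>w\<in>K. le z w)))}"
  have Kt: "K \<subseteq> topspace X" using K closedin_subset by blast
  have cov: "K \<subseteq> \<Union>C"
  proof
    fix w assume w: "w \<in> K"
    have wt: "w \<in> topspace X" using w Kt by blast
    show "w \<in> \<Union>C"
    proof (cases "le z w")
      case False
      then obtain U where U: "closedin X U" "openin X U" "is_upset X le U" "z \<in> U" "w \<notin> U"
        using sp[OF z(1) wt] by blast
      have "topspace X - U \<in> C"
        unfolding C_def dset_def using U po unfolding is_upset_def partial_order_on_space_def
        by (auto simp: openin_diff closedin_diff)
      then show ?thesis using wt U by blast
    next
      case True
      have "\<not> le w z" using True po z w wt unfolding partial_order_on_space_def by blast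
      then obtain U where U: "closedin X U" "openin X U" "is_upset X le U" "w \<in> U" "z \<notin> U"
        using sp[OF wt z(1)] by blast
      have "U \<in> C" unfolding C_def using U True w by blast
      then show ?thesis using U by blast
    qed
  qed
  have "\<forall>T\<in>C. openin X T" unfolding C_def by blast
  then obtain F where F: "finite F" "F \<subseteq> C" "K \<subseteq> \<Union>F"
    using ck cov unfolding compactin_def by meson
  define B where "B = \<Union>{T\<in>F. \<not> dset X le T}"
  define A where "A = topspace X - \<Union>{T\<in>F. dset X le T}"
  have FC: "\<And>T. T \<in> F \<Longrightarrow> openin X T \<and> closedin X T \<and> z \<notin> T \<and>
       (dset X le T \<or> (is_upset X le T \<and> (\<exists>w\<in>K. le z w)))"
    using F(2) unfolding C_def by blast
  have oB: "openin X B" unfolding B_def using FC by (auto intro: openin_Union)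
  have cB: "closedin X B" unfolding B_def using FC F(1) by (intro closedin_Union) auto
  have uB: "is_upset X le B" unfolding B_def is_upset_def using FC
    unfolding is_upset_def dset_def by blast
  have oA: "openin X A" unfolding A_def using FC F(1)
    by (intro openin_diff openin_topspace closedin_Union) auto
  have cA: "closedin X A" unfolding A_def using FC
    by (intro closedin_diff closedin_topspace openin_Union) auto
  have uA: "is_upset X le A" unfolding A_def is_upset_def using FC
    unfolding dset_def by blast
  have zA: "z \<in> A" unfolding A_def using z FC by blast
  have zB: "z \<notin> B" unfolding B_def using FC by blast
  have KA: "K \<inter> A \<subseteq> B" unfolding A_def B_def using F(3) by blast
  have Bemp: "(\<forall>w\<in>K. \<not> le z w) \<longrightarrow> B = {}" unfolding B_def using FC by blast
  show ?thesis
    apply (rule exI[where x=A])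
    apply (rule exI[where x=B])
    using oA cA uA oB cB uB zA zB KA Bemp by (intro conjI)
qed

lemma int1_open:
  assumes P: "priestley_space X le"
  shows "openin X (int1 X le A)"
proof (subst openin_subopen, intro ballI)
  fix z assume z: "z \<in> int1 X le A"
  have po: "partial_order_on_space X le" using P unfolding priestley_space_def by blast
  define K where "K = topspace X - X interior_of A"
  have K: "closedin X K" unfolding K_def by (simp add: closedin_diff)
  have zt: "z \<in> topspace X" using z unfolding int1_def by blast
  have zK: "z \<notin> K" using z int1_sub_int[OF po] unfolding K_def by blast
  have nle: "\<forall>w\<in>K. \<not> le z w" using z unfolding int1_def downclosure_def K_def by blast
  obtain A' B where AB: "openin X A'" "is_upset X le A'" "z \<in> A'" "K \<inter> A' \<subseteq> B"
    "(\<forall>w\<in>K. \<not> le z w) \<longrightarrow> B = {}"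
    using sep[OF P K zt zK] by blast
  have "B = {}" using AB(5) nle by simp
  then have "K \<inter> A' = {}" using AB(4) by simp
  then have KA: "\<And>y. y \<in> A' \<Longrightarrow> y \<notin> K" by blast
  have "A' \<subseteq> X interior_of A"
  proof
    fix y assume y: "y \<in> A'"
    have "y \<in> topspace X" using y openin_subset[OF AB(1)] by blast
    moreover have "y \<notin> K" using KA y by blast
    ultimately show "y \<in> X interior_of A" unfolding K_def by blast
  qed
  then have "A' \<subseteq> A" using interior_of_subset[of X A] by (rule order_trans)
  then have "A' \<subseteq> int1 X le A"
    by (rule openup_sub_int1[OF AB(1) AB(2)])
  then show "\<exists>T. openin X T \<and> z \<in> T \<and> T \<subseteq> int1 X le A" using AB by blast
qed

theorem theorem5p5:
  fixes X :: "'a topology" and le :: "'a \<Rightarrow> 'a \<Rightarrow> bool" and \<U> :: "'a set set"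
  assumes "priestley_space X le"
    and "\<forall>U\<in>\<U>. DM_set X le U"
  shows "DM_join_distributive X le \<U> \<longleftrightarrow>
           DM_join X le \<U> = int1 X le (X closure_of (\<Union>\<U>))"
proof -
  have P: "priestley_space X le" using assms(1) .
  have po: "partial_order_on_space X le" using P unfolding priestley_space_def by blast
  define S where "S = \<Union>\<U>"
  have St: "S \<subseteq> topspace X" using assms(2) unfolding S_def DM_set_def is_upset_def by blast
  have Ucl: "\<And>V. \<Union>((\<lambda>U. V \<inter> U) ` \<U>) = V \<inter> S" unfolding S_def by auto
  have clcl2: "X closure_of T \<subseteq> cl2 X le T" for T
  proof
    fix x assume x: "x \<in> X closure_of T"
    then have xt: "x \<in> topspace X" using closure_of_subset_topspace[of X T] by blast
    then have "le x x" using po unfolding partial_order_on_space_def by blast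
    then show "x \<in> cl2 X le T" using x xt unfolding cl2_def upclosure_def by blast
  qed
  have easy: "int1 X le (X closure_of S) \<subseteq> DM_join X le \<U>"
    unfolding DM_join_def S_def[symmetric] by (rule int1_mono[OF clcl2])
  show ?thesis
  proof
    assume D: "DM_join_distributive X le \<U>"
    have sub: "DM_join X le \<U> \<subseteq> X closure_of S"
    proof
      fix z assume zJ: "z \<in> DM_join X le \<U>"
      show "z \<in> X closure_of S"
      proof (rule ccontr)
        assume zn: "z \<notin> X closure_of S"
        have zt: "z \<in> topspace X" using zJ by (simp add: DM_join_def int1_def)
        obtain A B where AB: "openin X A" "closedin X A" "is_upset X le A"
          "openin X B" "closedin X B" "is_upset X le B" "z \<in> A" "z \<notin> B"
          "X closure_of S \<inter> A \<subseteq> B"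
          using sep[OF P closedin_closure_of zt zn] by blast
        have DA: "DM_set X le A" unfolding DM_set_def using AB clopen_up_fix[OF po] by blast
        have eq: "A \<inter> DM_join X le \<U> = DM_join X le ((\<lambda>U. A \<inter> U) ` \<U>)"
          using D DA unfolding DM_join_distributive_def by blast
        have "A \<inter> S \<subseteq> B" using AB(9) closure_of_subset[OF St] by blast
        then have "DM_join X le ((\<lambda>U. A \<inter> U) ` \<U>) \<subseteq> int1 X le (cl2 X le B)"
          unfolding DM_join_def Ucl by (intro int1_mono cl2_mono)
        also have "\<dots> = B" using clopen_up_fix[OF po AB(4,5,6)] .
        finally show False using eq zJ AB(7,8) by blast
      qed
    qed
    have "DM_join X le \<U> \<subseteq> X interior_of (X closure_of S)"
      using sub int1_open[OF P] unfolding DM_join_def by (simp add: interior_of_maximal)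
    moreover have "is_upset X le (DM_join X le \<U>)"
      unfolding is_upset_def DM_join_def using int1_upset[OF po]
      by (auto simp: int1_def)
    ultimately have "DM_join X le \<U> \<subseteq> int1 X le (X closure_of S)"
      using openup_sub_int1[OF int1_open[OF P], of le "cl2 X le (\<Union>\<U>)" "X closure_of S"]
        order_trans[OF _ interior_of_subset[of X "X closure_of S"]]
      unfolding DM_join_def by blast
    then show "DM_join X le \<U> = int1 X le (X closure_of (\<Union>\<U>))"
      using easy unfolding S_def by blast
  next
    assume E: "DM_join X le \<U> = int1 X le (X closure_of (\<Union>\<U>))"
    show "DM_join_distributive X le \<U>"
      unfolding DM_join_distributive_def
    proof (intro allI impI)
      fix V assume DV: "DM_set X le V"
      have oV: "openin X V" and uV: "is_upset X le V" and fV: "int1 X le (cl2 X le V) = V"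
        using DV unfolding DM_set_def by blast+
      have "V \<inter> int1 X le (X closure_of S) \<subseteq> int1 X le (cl2 X le (V \<inter> S))"
      proof
        fix x assume x: "x \<in> V \<inter> int1 X le (X closure_of S)"
        have W: "V \<inter> X interior_of (X closure_of S) \<subseteq> X interior_of (cl2 X le (V \<inter> S))"
        proof (rule interior_of_maximal)
          show "openin X (V \<inter> X interior_of (X closure_of S))" using oV by (simp add: openin_Int)
          have "V \<inter> X interior_of (X closure_of S) \<subseteq> V \<inter> X closure_of S"
            using interior_of_subset[of X "X closure_of S"] by blast
          also have "\<dots> \<subseteq> X closure_of (V \<inter> S)" by (rule openin_Int_closure_of_subset[OF oV])
          also have "\<dots> \<subseteq> cl2 X le (V \<inter> S)" by (rule clcl2)
          finally show "V \<inter> X interior_of (X closure_of S) \<subseteq> cl2 X le (V \<inter> S)" .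
        qed
        show "x \<in> int1 X le (cl2 X le (V \<inter> S))"
          using x W uV unfolding int1_def downclosure_def is_upset_def by blast
      qed
      moreover have "int1 X le (cl2 X le (V \<inter> S)) \<subseteq> V \<inter> int1 X le (X closure_of S)"
      proof -
        have "int1 X le (cl2 X le (V \<inter> S)) \<subseteq> int1 X le (cl2 X le V)"
          by (intro int1_mono cl2_mono) blast
        moreover have "int1 X le (cl2 X le (V \<inter> S)) \<subseteq> int1 X le (cl2 X le S)"
          by (intro int1_mono cl2_mono) blast
        ultimately show ?thesis using fV E unfolding DM_join_def S_def by blast
      qed
      ultimately show "V \<inter> DM_join X le \<U> = DM_join X le ((\<lambda>U. V \<inter> U) ` \<U>)"
        using E unfolding DM_join_def Ucl S_def[symmetric] by blast
    qed
  qed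
qed

end
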